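(* Let $G$ be a connected oriented diagram with $V\ge 2$ vertices, internal legs $\ell_1,\dots,\ell_I$, and no tadpoles. For each leg $j$, let $a_j$ and $b_j$ denote the tail and head vertices of $\ell_j$. Fix complex numbers $\zeta_j^\pm,\xi_j^\pm$ with $\operatorname{Im}\zeta_j^+>0$, $\operatorname{Im}\xi_j^+>0$, $\operatorname{Im}\zeta_j^-<0$, $\operatorname{Im}\xi_j^-<0$. For real $t\neq 0$ define $$\tilde z_j(t)=i\theta(t)e^{it\zeta_j^+}-i\theta(-t)e^{it\zeta_j^-},\qquad \tilde u_j(t)=i\theta(t)e^{it\zeta_j^+}-i\theta(-t)e^{it\xi_j^-},$$ $$\tilde v_j(t)=i\theta(t)e^{it\xi_j^+}-i\theta(-t)e^{it\zeta_j^-},\qquad \tilde w_j(t)=i\theta(t)e^{it\xi_j^+}-i\theta(-t)e^{it\xi_j^-},$$ where $\theta$ is the Heaviside step function. For a marking $M$ (a subset of the vertex set, with $m=|M|$), let $\tilde p_{Mj}$ be given by: - $\tilde p_{Mj}=\tilde z_j$ if $a_j,b_j$ are both unmarked; - $\tilde p_{Mj}=\tilde w_j$ if both are marked; - $\tilde p_{Mj}=\tilde u_j$ if $a_j$ is unmarked and $b_j$ is marked; - $\tilde p_{Mj}=\tilde v_j$ if $a_j$ is marked and $b_j$ is unmarked. Then for every $V$-tuple of pairwise distinct real times $t_1,\dots,t_V$ (where $t_a$ is attached to vertex $\nu_a$), $$\sum_{M}(-1)^{|M|}\prod_{j=1}^I\tilde p_{Mj}(t_{a_j}-t_{b_j})=0,$$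 the sum running over all markings $M$.
   Context: A diagram is a finite graph with vertices $\nu_1,\dots,\nu_V$ and oriented internal legs $\ell_1,\dots,\ell_I$ (multiple legs allowed); a tadpole is a leg whose two endpoints coincide. Let $c$ be the number of connected components and $L=I-V+c$. The diagram is oriented if there exist $L$ simple cycles that are directed cycles with respect to the leg orientations and whose edge-indicator vectors in $\mathbb{R}^I$ are linearly independent. The functions $\tilde z_j,\tilde w_j,\tilde u_j,\tilde v_j$ are the Fourier transforms $\int\frac{dE}{2\pi}e^{iEt}(\cdot)$ of $z_j,w_j,u_j,v_j$ obtained with $\sigma_j^\pm(E)=1/(E-\zeta_j^\pm)$ and $\tau_j^\pm(E)=1/(E-\xi_j^\pm)$, where $z_j=\sigma_j^++\sigma_j^-$, $w_j=\tau_j^++\tau_j^-$, $u_j=\sigma_j^++\tau_j^-$, $v_j=\sigma_j^-+\tau_j^+$. *)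

theory Defs
  imports Complex_Main
begin

text \<open>A diagram: vertices 0..<V, legs 0..<I; leg j has tail a j and head b j.\<close>

definition legs_ok :: "nat \<Rightarrow> nat \<Rightarrow> (nat \<Rightarrow> nat) \<Rightarrow> (nat \<Rightarrow> nat) \<Rightarrow> bool" where
  "legs_ok V I a b \<longleftrightarrow> (\<forall>j<I. a j < V \<and> b j < V)"

definition no_tadpoles :: "nat \<Rightarrow> (nat \<Rightarrow> nat) \<Rightarrow> (nat \<Rightarrow> nat) \<Rightarrow> bool" where
  "no_tadpoles I a b \<longleftrightarrow> (\<forall>j<I. a j \<noteq> b j)"

definition adjacent :: "nat \<Rightarrow> (nat \<Rightarrow> nat) \<Rightarrow> (nat \<Rightarrow> nat) \<Rightarrow> nat \<Rightarrow> nat \<Rightarrow> bool" where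
  "adjacent I a b x y \<longleftrightarrow> (\<exists>j<I. (a j = x \<and> b j = y) \<or> (a j = y \<and> b j = x))"

definition diagram_connected :: "nat \<Rightarrow> nat \<Rightarrow> (nat \<Rightarrow> nat) \<Rightarrow> (nat \<Rightarrow> nat) \<Rightarrow> bool" where
  "diagram_connected V I a b \<longleftrightarrow> (\<forall>x<V. \<forall>y<V. (adjacent I a b)\<^sup>*\<^sup>* x y)"

definition directed_simple_cycle :: "nat \<Rightarrow> (nat \<Rightarrow> nat) \<Rightarrow> (nat \<Rightarrow> nat) \<Rightarrow> nat list \<Rightarrow> bool" where
  "directed_simple_cycle I a b es \<longleftrightarrow>
     es \<noteq> [] \<and> distinct es \<and> (\<forall>e\<in>set es. e < I) \<and>
     (\<forall>k<length es. b (es ! k) = a (es ! ((k + 1) mod length es))) \<and>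
     distinct (map a es)"

definition edge_indicator :: "nat set \<Rightarrow> nat \<Rightarrow> real" where
  "edge_indicator C j = (if j \<in> C then 1 else 0)"

definition indicators_lin_indep :: "nat \<Rightarrow> nat \<Rightarrow> (nat \<Rightarrow> nat set) \<Rightarrow> bool" where
  "indicators_lin_indep I L C \<longleftrightarrow>
     (\<forall>c :: nat \<Rightarrow> real. (\<forall>j<I. (\<Sum>k<L. c k * edge_indicator (C k) j) = 0) \<longrightarrow> (\<forall>k<L. c k = 0))"

text \<open>Oriented (for a connected diagram, c = 1, so L = I - V + 1).\<close>
definition oriented :: "nat \<Rightarrow> nat \<Rightarrow> (nat \<Rightarrow> nat) \<Rightarrow> (nat \<Rightarrow> nat) \<Rightarrow> nat \<Rightarrow> bool" where
  "oriented V I a b L \<longleftrightarrow>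
     (\<exists>cyc :: nat \<Rightarrow> nat list. (\<forall>k<L. directed_simple_cycle I a b (cyc k)) \<and>
        indicators_lin_indep I L (\<lambda>k. set (cyc k)))"

definition heaviside :: "real \<Rightarrow> complex" where
  "heaviside t = (if t > 0 then 1 else 0)"

definition prop_tilde :: "complex \<Rightarrow> complex \<Rightarrow> real \<Rightarrow> complex" where
  "prop_tilde p q t = \<i> * heaviside t * exp (\<i> * of_real t * p)
                     - \<i> * heaviside (- t) * exp (\<i> * of_real t * q)"

text \<open>z~ = prop_tilde zeta+ zeta-, u~ = prop_tilde zeta+ xi-, v~ = prop_tilde xi+ zeta-, w~ = prop_tilde xi+ xi-.\<close>
definition p_marked ::
  "(nat \<Rightarrow> nat) \<Rightarrow> (nat \<Rightarrow> nat) \<Rightarrow> (nat \<Rightarrow> complex) \<Rightarrow> (nat \<Rightarrow> complex) \<Rightarrow> (nat \<Rightarrow> complex) \<Rightarrow> (nat \<Rightarrow> complex)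
   \<Rightarrow> nat set \<Rightarrow> nat \<Rightarrow> real \<Rightarrow> complex" where
  "p_marked a b zp zm xp xm M j =
     (if a j \<notin> M \<and> b j \<notin> M then prop_tilde (zp j) (zm j)
      else if a j \<in> M \<and> b j \<in> M then prop_tilde (xp j) (xm j)
      else if a j \<notin> M \<and> b j \<in> M then prop_tilde (zp j) (xm j)
      else prop_tilde (xp j) (zm j))"

end

theory Submission
  imports Defs
begin

lemma p_marked_min:
  assumes "v \<notin> M" "a j \<noteq> b j"
    and "a j = v \<Longrightarrow> t (a j) < t (b j)"
    and "b j = v \<Longrightarrow> t (b j) < t (a j)"
  shows "p_marked a b zp zm xp xm (insert v M) j (t (a j) - t (b j)) =
         p_marked a b zp zm xp xm M j (t (a j) - t (b j))"
proof (cases "a j = v")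
  case True
  then have "b j \<noteq> v" using assms by auto
  moreover have "t (a j) - t (b j) < 0" using assms True by auto
  ultimately show ?thesis using True assms(1)
    by (auto simp: p_marked_def prop_tilde_def heaviside_def)
next
  case F: False
  show ?thesis
  proof (cases "b j = v")
    case True
    have "t (a j) - t (b j) > 0" using assms True by auto
    then show ?thesis using True F assms(1)
      by (auto simp: p_marked_def prop_tilde_def heaviside_def)
  next
    case False
    then show ?thesis using F by (simp add: p_marked_def)
  qed
qed

theorem mainTheorem3:
  fixes V I :: nat and a b :: "nat \<Rightarrow> nat"
    and zp zm xp xm :: "nat \<Rightarrow> complex" and t :: "nat \<Rightarrow> real"
  assumes "legs_ok V I a b"
    and "diagram_connected V I a b"
    and "oriented V I a b (I + 1 - V)"
    and "V \<ge> 2"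
    and "no_tadpoles I a b"
    and "\<forall>j<I. Im (zp j) > 0 \<and> Im (xp j) > 0 \<and> Im (zm j) < 0 \<and> Im (xm j) < 0"
    and "inj_on t {..<V}"
  shows "(\<Sum>M\<in>Pow {..<V}. (-1) ^ card M *
            (\<Prod>j<I. p_marked a b zp zm xp xm M j (t (a j) - t (b j)))) = 0"
proof -
  define S where "S = t ` {..<V}"
  have "finite S" "S \<noteq> {}" using assms(4) by (auto simp: S_def lessThan_empty_iff)
  then have "Min S \<in> S" by simp
  then obtain v where v: "v < V" "t v = Min S" by (auto simp: S_def)
  have vmin: "t v < t u" if "u < V" "u \<noteq> v" for u
  proof -
    have "t v \<le> t u" using v \<open>finite S\<close> that by (auto simp: S_def)
    moreover have "t v \<noteq> t u" using assms(7) that v(1) by (auto simp: inj_on_def)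
    ultimately show ?thesis by simp
  qed
  define F where "F M = (\<Prod>j<I. p_marked a b zp zm xp xm M j (t (a j) - t (b j)))" for M
  define B where "B = {..<V} - {v}"
  have vB: "v \<notin> B" and fB: "finite B" by (auto simp: B_def)
  have U: "{..<V} = insert v B" using v by (auto simp: B_def)
  have FM: "F (insert v M) = F M" if "M \<in> Pow B" for M
    unfolding F_def
  proof (rule prod.cong[OF refl])
    fix j assume "j \<in> {..<I}"
    then have j: "a j < V" "b j < V" "a j \<noteq> b j"
      using assms(1,5) by (auto simp: legs_ok_def no_tadpoles_def)
    show "p_marked a b zp zm xp xm (insert v M) j (t (a j) - t (b j)) =
         p_marked a b zp zm xp xm M j (t (a j) - t (b j))"
      apply (rule p_marked_min)
      using that vB j vmin by auto
  qed
  have "(\<Sum>M\<in>Pow {..<V}. (-1) ^ card M * F M)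
      = (\<Sum>M\<in>Pow B. (-1) ^ card M * F M) + (\<Sum>M\<in>insert v ` Pow B. (-1) ^ card M * F M)"
    unfolding U Pow_insert
    apply (rule sum.union_disjoint)
    using fB vB by auto
  also have "(\<Sum>M\<in>insert v ` Pow B. (-1) ^ card M * F M)
      = (\<Sum>M\<in>Pow B. (-1) ^ card (insert v M) * F (insert v M))"
    apply (rule sum.reindex[unfolded comp_def])
    using vB by (auto simp: inj_on_def)
  also have "\<dots> = (\<Sum>M\<in>Pow B. - ((-1) ^ card M * F M))"
    apply (rule sum.cong[OF refl])
    subgoal for M using FM[of M] vB fB finite_subset[of M B]
      by (auto simp: card_insert_if)
    done
  finally show ?thesis by (simp add: F_def sum_negf)
qed

end
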